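(* Let $\mathbf B_n$ be the $n$-th Bell number. Then $\lim_{n\to\infty}\mathbf B_n/\alpha_n(12\text{-}34)=0$.
   Context: A permutation $\pi=\pi_1\cdots\pi_n$ of $\{1,\dots,n\}$ contains the generalized pattern $12\text{-}34$ if there are indices $i<j$ with $i+1<j$ such that $\pi_i<\pi_{i+1}<\pi_j<\pi_{j+1}$; otherwise it avoids it. $\alpha_n(12\text{-}34)$ is the number of permutations of $\{1,\dots,n\}$ avoiding $12\text{-}34$. The Bell number $\mathbf B_n$ is the number of set partitions of an $n$-element set. *)

theory Defs
  imports Complex_Main "HOL-Library.Disjoint_Sets"
begin

definition bell :: "nat \<Rightarrow> nat" where
  "bell n = card {P. partition_on {1..n} P}"

text \<open>Permutations of {1..n} in one-line notation, as lists (0-indexed positions).\<close>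
definition perms :: "nat \<Rightarrow> nat list set" where
  "perms n = {p. distinct p \<and> set p = {1..n}}"

definition contains_12_34 :: "nat list \<Rightarrow> bool" where
  "contains_12_34 p \<longleftrightarrow> (\<exists>i j. i + 1 < j \<and> j + 1 < length p \<and>
      p ! i < p ! (i + 1) \<and> p ! (i + 1) < p ! j \<and> p ! j < p ! (j + 1))"

definition alpha_12_34 :: "nat \<Rightarrow> nat" where
  "alpha_12_34 n = card {p \<in> perms n. \<not> contains_12_34 p}"

end

theory Submission
  imports Defs "HOL-Combinatorics.Multiset_Permutations"
begin


lemma part_split:
  assumes "a \<in> A"
  shows "{P. partition_on A P} \<subseteq> (\<lambda>(S,Q). insert (insert a S) Q) `
     (SIGMA S:Pow (A - {a}). {Q. partition_on (A - {a} - S) Q})"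
proof
  fix P assume "P \<in> {P. partition_on A P}"
  hence P: "partition_on A P" by simp
  obtain B where B: "B \<in> P" "a \<in> B" using P assms partition_onD1 by blast
  have BA: "B \<subseteq> A" using P B partition_onD1 by blast
  have dj: "disjnt B (\<Union>(P - {B}))" using P B
    unfolding partition_on_def disjoint_def disjnt_def by blast
  have PP: "P = insert B (P - {B})" using B by blast
  have "partition_on A (insert B (P - {B}))" using P PP by simp
  hence "partition_on (A - B) (P - {B})" using partition_on_insert[OF dj] by blast
  moreover have "A - B = A - {a} - (B - {a})" using B by blast
  ultimately have Q: "partition_on (A - {a} - (B - {a})) (P - {B})" by simp
  have "insert a (B - {a}) = B" using B by blast
  hence "P = insert (insert a (B - {a})) (P - {B})" using PP by simp
  thus "P \<in> (\<lambda>(S,Q). insert (insert a S) Q) `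
     (SIGMA S:Pow (A - {a}). {Q. partition_on (A - {a} - S) Q})"
    using Q BA by (intro image_eqI[where x="(B - {a}, P - {B})"]) auto
qed

lemma sum_pow_card:
  assumes "finite A"
  shows "(\<Sum>S\<in>Pow A. h (card S)) = (\<Sum>k\<le>card A. real (card A choose k) * h k)"
proof -
  have "(\<Sum>S\<in>Pow A. h (card S)) = (\<Sum>k\<le>card A. \<Sum>S\<in>{S. S \<in> Pow A \<and> card S = k}. h (card S))"
    using assms by (intro sum.group[symmetric]) (auto intro: card_mono)
  also have "\<dots> = (\<Sum>k\<le>card A. \<Sum>S\<in>{S. S \<subseteq> A \<and> card S = k}. h k)"
    by (intro sum.cong) auto
  also have "\<dots> = (\<Sum>k\<le>card A. real (card A choose k) * h k)"
    using n_subsets[OF assms] by simp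
  finally show ?thesis .
qed

lemma part_bound:
  fixes g :: "nat \<Rightarrow> real"
  assumes base: "\<And>n. n \<le> N \<Longrightarrow> 2^(2^n) \<le> g n"
    and step: "\<And>n. n \<ge> N \<Longrightarrow> (\<Sum>k\<le>n. real (n choose k) * g (n - k)) \<le> g (Suc n)"
  shows "finite A \<Longrightarrow> real (card {P. partition_on A P}) \<le> g (card A)"
proof (induction "card A" arbitrary: A rule: less_induct)
  case less
  show ?case
  proof (cases "card A \<le> N")
    case True
    have "card {P. partition_on A P} \<le> card (Pow (Pow A))"
      using less.prems by (intro card_mono) (auto simp: partition_on_def)
    also have "\<dots> = 2^(2^card A)" using less.prems by (simp add: card_Pow)
    finally have "real (card {P. partition_on A P}) \<le> 2^(2^card A)"
      by (metis of_nat_le_iff of_nat_numeral of_nat_power)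
    then show ?thesis using base[OF True] by linarith
  next
    case False
    then obtain a where a: "a \<in> A" by fastforce
    define A' where "A' = A - {a}"
    have fA': "finite A'" using less.prems A'_def by simp
    have cA: "card A = Suc (card A')" using a less.prems A'_def
      by (metis card_Suc_Diff1)
    have nN: "card A' \<ge> N" using False cA by simp
    have "card {P. partition_on A P} \<le> card ((\<lambda>(S,Q). insert (insert a S) Q) `
       (SIGMA S:Pow A'. {Q. partition_on (A' - S) Q}))"
      using part_split[OF a] fA' unfolding A'_def
      by (intro card_mono) (auto intro!: finite_imageI finite_SigmaI finitely_many_partition_on)
    also have "\<dots> \<le> card (SIGMA S:Pow A'. {Q. partition_on (A' - S) Q})"
      by (rule card_image_le) (auto intro!: finite_SigmaI finitely_many_partition_on fA')
    also have "\<dots> = (\<Sum>S\<in>Pow A'. card {Q. partition_on (A' - S) Q})"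
      using fA' by (simp add: finitely_many_partition_on)
    finally have "real (card {P. partition_on A P}) \<le> (\<Sum>S\<in>Pow A'. real (card {Q. partition_on (A' - S) Q}))"
      by (metis of_nat_le_iff of_nat_sum)
    also have "\<dots> \<le> (\<Sum>S\<in>Pow A'. g (card A' - card S))"
    proof (intro sum_mono)
      fix S assume S: "S \<in> Pow A'"
      have "card (A' - S) < card A" using cA fA' S by (simp add: card_mono le_imp_less_Suc)
      moreover have "card (A' - S) = card A' - card S" using fA' S
        by (auto intro: card_Diff_subset finite_subset)
      ultimately show "real (card {Q. partition_on (A' - S) Q}) \<le> g (card A' - card S)"
        using less.hyps[of "A' - S"] fA' by auto
    qed
    also have "\<dots> = (\<Sum>k\<le>card A'. real (card A' choose k) * g (card A' - k))"
      using sum_pow_card[OF fA', of "\<lambda>k. g (card A' - k)"] by simp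
    also have "\<dots> \<le> g (card A)" using step[OF nN] cA by simp
    finally show ?thesis .
  qed
qed



lemma exp_partial: "(\<Sum>k\<le>n. (4::real)^k / fact k) \<le> exp 4"
proof -
  have s: "(\<lambda>k. (4::real)^k / fact k) sums exp 4"
    using exp_converges[of "4::real"] by (simp add: divide_inverse mult.commute scaleR_conv_of_real)
  have "(\<Sum>k<Suc n. (4::real)^k / fact k) \<le> suminf (\<lambda>k. (4::real)^k / fact k)"
    using s by (intro sum_le_suminf) (auto simp: sums_summable)
  thus ?thesis using s sums_unique lessThan_Suc_atMost by metis
qed

lemma bell_bound:
  obtains K :: real where "\<And>n. real (bell n) \<le> K * fact n / 4^n"
proof -
  obtain N :: nat where N: "4 * exp 4 \<le> real N" using real_arch_simple by blast
  define K :: real where "K = 2^(2^N) * 4^N"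
  define g where "g n = K * fact n / 4^n" for n
  have base: "2^(2^n) \<le> g n" if "n \<le> N" for n
  proof -
    have h1: "(2::real)^(2^n) \<le> 2^(2^N)" using that by (intro power_increasing) auto
    have "(4::real)^n \<le> 4^N" using that by (intro power_increasing) auto
    hence "1 \<le> (4::real)^N / 4^n" by simp
    moreover have "1 \<le> (fact n :: real)" by simp
    ultimately have "(2::real)^(2^N) * 1 * 1 \<le> 2^(2^N) * (4^N / 4^n) * fact n"
      by (intro mult_mono) auto
    hence "(2::real)^(2^N) \<le> g n" unfolding g_def K_def by simp
    thus ?thesis using h1 by linarith
  qed
  have step: "(\<Sum>k\<le>n. real (n choose k) * g (n - k)) \<le> g (Suc n)" if "n \<ge> N" for n
  proof -
    have "(\<Sum>k\<le>n. real (n choose k) * g (n - k)) = (\<Sum>k\<le>n. K * fact n / 4^n * (4^k / fact k))"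
    proof (intro sum.cong refl)
      fix k assume k: "k \<in> {..n}"
      have "real (n choose k) = fact n / (fact k * fact (n - k))" using k by (simp add: binomial_fact)
      moreover have "(4::real)^n = 4^k * 4^(n-k)" using k by (simp flip: power_add)
      ultimately show "real (n choose k) * g (n - k) = K * fact n / 4^n * (4^k / fact k)"
        unfolding g_def by (simp add: field_simps)
    qed
    also have "\<dots> = K * fact n / 4^n * (\<Sum>k\<le>n. 4^k / fact k)" by (simp add: sum_distrib_left)
    also have "\<dots> \<le> K * fact n / 4^n * exp 4"
      by (intro mult_left_mono exp_partial) (auto simp: K_def)
    also have "\<dots> \<le> K * fact n / 4^n * ((n+1) / 4)"
      using N that by (intro mult_left_mono) (auto simp: K_def)
    also have "\<dots> = g (Suc n)" unfolding g_def by (simp add: field_simps)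
    finally show ?thesis .
  qed
  have "real (bell n) \<le> K * fact n / 4^n" for n
    using part_bound[of N g "{1..n}", OF base step] unfolding bell_def g_def by simp
  thus ?thesis using that by blast
qed



function inter :: "nat list \<Rightarrow> nat list \<Rightarrow> nat list" where
  "inter [] ys = ys"
| "inter (x # xs) ys = x # inter ys xs"
  by pat_completeness auto
termination by (relation "measure (\<lambda>(xs,ys). length xs + length ys)") auto

lemma inter_length [simp]: "length (inter xs ys) = length xs + length ys"
  by (induction xs ys rule: inter.induct) auto

lemma inter_set [simp]: "set (inter xs ys) = set xs \<union> set ys"
  by (induction xs ys rule: inter.induct) auto

lemma inter_distinct: "distinct xs \<Longrightarrow> distinct ys \<Longrightarrow> set xs \<inter> set ys = {} \<Longrightarrow> distinct (inter xs ys)"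
  by (induction xs ys rule: inter.induct) auto

lemma inter_nth:
  "length ys \<le> length xs \<Longrightarrow> length xs \<le> Suc (length ys) \<Longrightarrow> i < length xs + length ys \<Longrightarrow>
   inter xs ys ! i = (if even i then xs ! (i div 2) else ys ! (i div 2))"
proof (induction xs ys arbitrary: i rule: inter.induct)
  case (1 ys)
  then show ?case by simp
next
  case (2 x xs ys)
  show ?case
  proof (cases i)
    case 0
    then show ?thesis by simp
  next
    case (Suc j)
    have "inter ys xs ! j = (if even j then ys ! (j div 2) else xs ! (j div 2))"
      using 2 Suc by (intro "2.IH") auto
    then show ?thesis using Suc by (auto elim!: oddE)
  qed
qed

lemma no_contains:
  assumes "\<And>i. i < length p \<Longrightarrow> (p ! i \<le> c \<longleftrightarrow> even i)"
  shows "\<not> contains_12_34 p"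
proof
  assume "contains_12_34 p"
  then obtain i j where ij: "i + 1 < j" "j + 1 < length p" "p ! i < p ! (i + 1)"
    "p ! (i + 1) < p ! j" "p ! j < p ! (j + 1)" unfolding contains_12_34_def by blast
  have asc: "p ! k \<le> c \<and> \<not> p ! (k+1) \<le> c" if "k + 1 < length p" "p ! k < p ! (k+1)" for k
  proof (cases "even k")
    case True
    then show ?thesis using assms[of k] assms[of "k+1"] that by auto
  next
    case False
    then show ?thesis using assms[of k] assms[of "k+1"] that by auto
  qed
  from asc[of i] asc[of j] ij show False by auto
qed

lemma alpha_bound: "fact ((n+1) div 2) * fact (n - (n+1) div 2) \<le> alpha_12_34 n"
proof -
  define c where "c = (n+1) div 2"
  define X where "X = permutations_of_set {1..c} \<times> permutations_of_set {c+1..n}"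
  have cn: "c \<le> n" "n - c \<le> c" "c \<le> Suc (n - c)" unfolding c_def by auto
  have sub: "(\<lambda>(xs,ys). inter xs ys) ` X \<subseteq> {p \<in> perms n. \<not> contains_12_34 p}"
  proof clarify
    fix xs ys assume "(xs, ys) \<in> X"
    hence xs: "set xs = {1..c}" "distinct xs" and ys: "set ys = {c+1..n}" "distinct ys"
      unfolding X_def permutations_of_set_def by auto
    have lx: "length xs = c" using xs distinct_card by fastforce
    have ly: "length ys = n - c" using ys distinct_card by fastforce
    have "inter xs ys \<in> perms n"
      unfolding perms_def using xs ys cn by (auto intro!: inter_distinct)
    moreover have "\<not> contains_12_34 (inter xs ys)"
    proof (rule no_contains[where c = c])
      fix i assume i: "i < length (inter xs ys)"
      hence i': "i < n" using lx ly cn by simp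
      have nth: "inter xs ys ! i = (if even i then xs ! (i div 2) else ys ! (i div 2))"
        using i lx ly cn by (intro inter_nth) auto
      show "(inter xs ys ! i \<le> c) = even i"
      proof (cases "even i")
        case True
        have "i div 2 < length xs" using True i' lx unfolding c_def by (auto elim!: evenE)
        hence "xs ! (i div 2) \<in> {1..c}" using xs nth_mem by blast
        then show ?thesis using True nth by auto
      next
        case False
        have "i div 2 < length ys" using False i' ly unfolding c_def by (auto elim!: oddE)
        hence "ys ! (i div 2) \<in> {c+1..n}" using ys nth_mem by blast
        then show ?thesis using False nth by auto
      qed
    qed
    ultimately show "inter xs ys \<in> perms n \<and> \<not> contains_12_34 (inter xs ys)" by blast
  qed
  have inj: "inj_on (\<lambda>(xs,ys). inter xs ys) X"
  proof (rule inj_onI, clarify)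
    fix xs ys xs' ys' assume A: "(xs, ys) \<in> X" "(xs', ys') \<in> X" "inter xs ys = inter xs' ys'"
    have l: "length xs = c" "length ys = n - c" "length xs' = c" "length ys' = n - c"
      using A(1,2) unfolding X_def by (auto dest: length_finite_permutations_of_set)
    have "xs = xs'"
    proof (rule nth_equalityI)
      show "length xs = length xs'" using l by simp
      fix k assume k: "k < length xs"
      have "inter xs ys ! (2*k) = xs ! k" using l k cn by (subst inter_nth) auto
      moreover have "inter xs' ys' ! (2*k) = xs' ! k" using l k cn by (subst inter_nth) auto
      ultimately show "xs ! k = xs' ! k" using A(3) by simp
    qed
    moreover have "ys = ys'"
    proof (rule nth_equalityI)
      show "length ys = length ys'" using l by simp
      fix k assume k: "k < length ys"
      have "inter xs ys ! (2*k+1) = ys ! k" using l k cn by (subst inter_nth) auto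
      moreover have "inter xs' ys' ! (2*k+1) = ys' ! k" using l k cn by (subst inter_nth) auto
      ultimately show "ys ! k = ys' ! k" using A(3) by simp
    qed
    ultimately show "xs = xs' \<and> ys = ys'" by simp
  qed
  have fin: "finite {p \<in> perms n. \<not> contains_12_34 p}"
  proof -
    have "perms n = permutations_of_set {1..n}" unfolding perms_def permutations_of_set_def by auto
    thus ?thesis by simp
  qed
  have cX: "card X = fact c * fact (n - c)" unfolding X_def by (simp add: card_cartesian_product)
  have ci: "card ((\<lambda>(xs,ys). inter xs ys) ` X) = card X" by (rule card_image[OF inj])
  have "card ((\<lambda>(xs,ys). inter xs ys) ` X) \<le> alpha_12_34 n"
    unfolding alpha_12_34_def by (intro card_mono fin sub)
  thus ?thesis using cX ci unfolding c_def by simp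
qed



lemma aux1: "a>0 \<Longrightarrow> f>0 \<Longrightarrow> (K*f/(a*a))/(f/a) = K/(a::real)" by (simp add: field_simps)

theorem mainTheorem6:
  shows "(\<lambda>n. real (bell n) / real (alpha_12_34 n)) \<longlonglongrightarrow> 0"
proof -
  obtain K :: real where K: "\<And>n. real (bell n) \<le> K * fact n / 4^n" using bell_bound by blast
  have alow: "fact n / 2^n \<le> real (alpha_12_34 n)" for n
  proof -
    define c where "c = (n+1) div 2"
    have cn: "c \<le> n" unfolding c_def by auto
    have "(fact n :: real) = real (n choose c) * (fact c * fact (n - c))"
      using binomial_fact[OF cn, where 'a=real] by (simp add: field_simps)
    also have "\<dots> \<le> 2^n * (fact c * fact (n - c))"
    proof -
      have "real (n choose c) \<le> 2^n"
        by (metis binomial_le_pow2 of_nat_le_iff of_nat_numeral of_nat_power)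
      thus ?thesis by (intro mult_right_mono) auto
    qed
    also have "fact c * fact (n - c) \<le> real (alpha_12_34 n)"
      using alpha_bound[of n] unfolding c_def by (metis of_nat_fact of_nat_le_iff of_nat_mult)
    hence "2^n * (fact c * fact (n - c)) \<le> (2::real)^n * real (alpha_12_34 n)"
      by (intro mult_left_mono) auto
    finally show ?thesis by (simp add: pos_divide_le_eq mult.commute)
  qed
  have bnd: "real (bell n) / real (alpha_12_34 n) \<le> K * (1/2)^n" for n
  proof -
    have pos: "0 < fact n / (2::real)^n" by simp
    have "real (bell n) / real (alpha_12_34 n) \<le> real (bell n) / (fact n / 2^n)"
    proof -
      have ap: "0 < real (alpha_12_34 n)" using alow[of n] pos by linarith
      show ?thesis by (rule divide_left_mono[OF alow[of n]]) (simp, rule mult_pos_pos[OF ap pos])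
    qed
    also have "\<dots> \<le> (K * fact n / 4^n) / (fact n / 2^n)"
      using K[of n] pos by (intro divide_right_mono) auto
    also have "\<dots> = K / 2^n"
    proof -
      have f: "(4::real)^n = 2^n * 2^n" using power_mult_distrib[of "2::real" 2 n] by simp
      show ?thesis unfolding f by (rule aux1) auto
    qed
    also have "\<dots> = K * (1/2)^n" unfolding power_one_over by simp
    finally show ?thesis .
  qed
  have lim: "(\<lambda>n. K * (1/2::real)^n) \<longlonglongrightarrow> 0"
    by (intro tendsto_mult_right_zero LIMSEQ_power_zero) auto
  show ?thesis
    by (rule tendsto_sandwich[OF _ _ tendsto_const lim]) (simp_all add: bnd always_eventually)
qed


end
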